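(* Let $\mathcal{X}\subseteq\mathbb{R}^d$ be nonempty, closed and convex, and let $f=\frac1n\sum_{i=1}^nf_i$, where each $f_i:\mathbb{R}^d\to\mathbb{R}$ is differentiable, $\mu_i$-strongly convex and $L_i$-smooth on an open convex set containing $\mathcal{X}$, with $0<\mu_i\le L_i$. Let $x_\star\in\operatorname{arg\,min}_{x\in\mathcal{X}}f(x)$, $x_{\star,i}\in\operatorname{arg\,min}_{x\in\mathcal{X}}f_i(x)$, and $D:=\max_i\|x_{\star,i}-x_\star\|$. Define $\theta_i:=\frac{2\sqrt{\mu_iL_i}}{L_i+\mu_i}$, $\rho_i:=\frac{L_i-\mu_i}{L_i+\mu_i}=\sqrt{1-\theta_i^2}$, $\bar\rho:=\frac1n\sum_{i=1}^n\rho_i$. Let $x_0\in\mathcal{X}$, let $i_k$ be sampled uniformly from $\{1,\dots,n\}$ independently of the past, and let $x_{k+1}\in\operatorname{arg\,min}_{z\in\mathcal{X}\cap\mathcal{B}(x_k,t_k)}\langle\nabla f_{i_k}(x_k),z\rangle$ with $t_k:=\theta_{i_k}\|x_k-x_{\star,i_k}\|$. Then for every $k\ge0$, $\|x_{k+1}-x_{\star,i_k}\|^2\le\rho_{i_k}^2\|x_k-x_{\star,i_k}\|^2$, and consequently $$\mathbb{E}\|x_k-x_\star\|\le\bar\rho^k\|x_0-x_\star\|+\frac{1+\bar\rho}{1-\bar\rho}D.$$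
   Context: $\|\cdot\|$ is the Euclidean norm, $\mathcal{B}(x,t):=\{y:\|y-x\|\le t\}$; $L_i$-smooth: $\nabla f_i$ is $L_i$-Lipschitz; $\mu_i$-strongly convex: $f_i(y)\ge f_i(x)+\langle\nabla f_i(x),y-x\rangle+\frac{\mu_i}2\|y-x\|^2$. *)

theory Defs
  imports "HOL-Analysis.Analysis"
begin

end

theory Submission
  imports Defs
begin

lemma descent:
  fixes h :: "'a::euclidean_space \<Rightarrow> real" and G :: "'a \<Rightarrow> 'a"
  assumes deriv: "\<And>y. y \<in> U \<Longrightarrow> (h has_derivative (\<lambda>d. inner (G y) d)) (at y)"
    and lip: "\<And>y z. y \<in> U \<Longrightarrow> z \<in> U \<Longrightarrow> norm (G y - G z) \<le> L * norm (y - z)"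
    and seg: "closed_segment v w \<subseteq> U"
  shows "h w \<le> h v + inner (G v) (w - v) + L / 2 * norm (w - v) ^ 2"
proof -
  define F where "F s = h (v + s *\<^sub>R (w - v)) - s * inner (G v) (w - v) - L / 2 * s ^ 2 * norm (w - v) ^ 2" for s
  have "F 1 \<le> F 0"
  proof (rule DERIV_nonpos_imp_nonincreasing[of 0 1 F])
    fix s :: real assume s: "0 \<le> s" "s \<le> 1"
    define p where "p = v + s *\<^sub>R (w - v)"
    have "p = (1 - s) *\<^sub>R v + s *\<^sub>R w" unfolding p_def by (simp add: algebra_simps)
    then have pU: "p \<in> U" using seg s unfolding closed_segment_def by blast
    have vU: "v \<in> U" using seg by auto
    have d1: "((\<lambda>s. v + s *\<^sub>R (w - v)) has_derivative (\<lambda>ds. ds *\<^sub>R (w - v))) (at s)"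
      by (auto intro!: derivative_eq_intros)
    have d2: "((\<lambda>s. h (v + s *\<^sub>R (w - v))) has_derivative (\<lambda>ds. inner (G p) (ds *\<^sub>R (w - v)))) (at s)"
      using has_derivative_compose[OF d1 deriv[of "v + s *\<^sub>R (w - v)"]] pU by (simp add: p_def)
    have "(\<lambda>ds. inner (G p) (ds *\<^sub>R (w - v))) = (*) (inner (G p) (w - v))"
      by (auto simp: fun_eq_iff)
    with d2 have d3: "((\<lambda>s. h (v + s *\<^sub>R (w - v))) has_field_derivative inner (G p) (w - v)) (at s)"
      by (simp add: has_field_derivative_def)
    have d4: "(F has_field_derivative (inner (G p) (w - v) - inner (G v) (w - v) - L / 2 * (2 * s) * norm (w - v) ^ 2)) (at s)"
      unfolding F_def
      by (rule derivative_eq_intros d3 refl | simp)+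
    have "inner (G p) (w - v) - inner (G v) (w - v) = inner (G p - G v) (w - v)"
      by (simp add: inner_diff_left)
    also have "\<dots> \<le> norm (G p - G v) * norm (w - v)" by (rule norm_cauchy_schwarz)
    also have "\<dots> \<le> (L * norm (p - v)) * norm (w - v)"
      by (rule mult_right_mono[OF lip[OF pU vU]]) simp
    also have "norm (p - v) = s * norm (w - v)" using s by (simp add: p_def)
    finally have "inner (G p) (w - v) - inner (G v) (w - v) - L / 2 * (2 * s) * norm (w - v) ^ 2 \<le> 0"
      by (simp add: power2_eq_square algebra_simps)
    with d4 show "\<exists>y. (F has_real_derivative y) (at s) \<and> y \<le> 0" by blast
  qed simp
  then show ?thesis unfolding F_def by simp
qed

lemma half_cocoercive:
  fixes \<phi> :: "'a::euclidean_space \<Rightarrow> real" and G :: "'a \<Rightarrow> 'a"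
  assumes conv: "\<And>x y. x \<in> U \<Longrightarrow> y \<in> U \<Longrightarrow> \<phi> y \<ge> \<phi> x + inner (G x) (y - x)"
    and desc: "\<And>x y. closed_segment x y \<subseteq> U \<Longrightarrow> \<phi> y \<le> \<phi> x + inner (G x) (y - x) + K / 2 * norm (y - x) ^ 2"
    and K: "K > 0" and vU: "v \<in> U"
    and s1: "closed_segment w (w - (1 / K) *\<^sub>R (G w - G v)) \<subseteq> U"
  shows "\<phi> w \<ge> \<phi> v + inner (G v) (w - v) + norm (G w - G v) ^ 2 / (2 * K)"
proof -
  define b where "b = G w - G v"
  define p where "p = w - (1 / K) *\<^sub>R b"
  have pU: "p \<in> U" using s1 unfolding p_def b_def by auto
  have e1: "\<phi> p \<ge> \<phi> v + inner (G v) (p - v)" using conv[OF vU pU] .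
  have e2: "\<phi> p \<le> \<phi> w + inner (G w) (p - w) + K / 2 * norm (p - w) ^ 2"
    using desc s1 unfolding p_def b_def by blast
  have i1: "inner (G v) (p - v) = inner (G v) (w - v) - (1 / K) * inner (G v) b"
    unfolding p_def by (simp add: inner_diff_right algebra_simps)
  have i2: "inner (G w) (p - w) = - ((1 / K) * inner (G w) b)"
    unfolding p_def by (simp add: inner_diff_right algebra_simps)
  have i3: "norm (p - w) ^ 2 = (1 / K) ^ 2 * norm b ^ 2"
    unfolding p_def using K by (simp add: power_mult_distrib power_divide)
  have i4: "inner (G w) b - inner (G v) b = norm b ^ 2"
    by (simp add: b_def power2_norm_eq_inner inner_diff_left)
  have "K / 2 * norm (p - w) ^ 2 = norm b ^ 2 / (2 * K)"
    unfolding i3 using K by (simp add: power2_eq_square field_simps)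
  moreover have "(1 / K) * inner (G w) b - (1 / K) * inner (G v) b = norm b ^ 2 / K"
    using i4 K by (simp add: field_simps)
  moreover have "norm b ^ 2 / K - norm b ^ 2 / (2 * K) = norm b ^ 2 / (2 * K)"
    using K by (simp add: field_simps)
  ultimately show ?thesis using e1 e2 i1 i2 i3 unfolding b_def by linarith
qed

lemma cocoercive_local:
  fixes \<phi> :: "'a::euclidean_space \<Rightarrow> real" and G :: "'a \<Rightarrow> 'a"
  assumes conv: "\<And>x y. x \<in> U \<Longrightarrow> y \<in> U \<Longrightarrow> \<phi> y \<ge> \<phi> x + inner (G x) (y - x)"
    and desc: "\<And>x y. closed_segment x y \<subseteq> U \<Longrightarrow> \<phi> y \<le> \<phi> x + inner (G x) (y - x) + K / 2 * norm (y - x) ^ 2"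
    and K: "K > 0" and vU: "v \<in> U" and wU: "w \<in> U"
    and s1: "closed_segment w (w - (1 / K) *\<^sub>R (G w - G v)) \<subseteq> U"
    and s2: "closed_segment v (v - (1 / K) *\<^sub>R (G v - G w)) \<subseteq> U"
  shows "norm (G w - G v) ^ 2 \<le> K * inner (G w - G v) (w - v)"
proof -
  have a: "\<phi> w \<ge> \<phi> v + inner (G v) (w - v) + norm (G w - G v) ^ 2 / (2 * K)"
    by (rule half_cocoercive[OF conv desc K vU s1])
  have b: "\<phi> v \<ge> \<phi> w + inner (G w) (v - w) + norm (G v - G w) ^ 2 / (2 * K)"
    by (rule half_cocoercive[OF conv desc K wU s2])
  have n: "norm (G v - G w) = norm (G w - G v)" by (rule norm_minus_commute)
  have "inner (G w - G v) (w - v) = - inner (G v) (w - v) - inner (G w) (v - w)"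
    by (simp add: inner_diff_left inner_diff_right algebra_simps)
  then have "norm (G w - G v) ^ 2 / (2 * K) + norm (G w - G v) ^ 2 / (2 * K) \<le> inner (G w - G v) (w - v)"
    using a b[unfolded n] by linarith
  moreover have "norm (G w - G v) ^ 2 / (2 * K) + norm (G w - G v) ^ 2 / (2 * K) = norm (G w - G v) ^ 2 / K"
    by (simp add: field_simps)
  ultimately have "norm (G w - G v) ^ 2 / K \<le> inner (G w - G v) (w - v)" by simp
  then show ?thesis using K by (simp add: field_simps)
qed

lemma norm_diff_sq: "norm (y - x) ^ 2 = norm y ^ 2 - 2 * inner x y + norm (x::'a::real_inner) ^ 2"
  by (simp add: power2_norm_eq_inner inner_diff_left inner_diff_right inner_commute)

lemma coco_local_h:
  fixes h :: "'a::euclidean_space \<Rightarrow> real" and G :: "'a \<Rightarrow> 'a"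
  assumes deriv: "\<And>y. y \<in> U \<Longrightarrow> (h has_derivative (\<lambda>d. inner (G y) d)) (at y)"
    and lip: "\<And>y z. y \<in> U \<Longrightarrow> z \<in> U \<Longrightarrow> norm (G y - G z) \<le> L * norm (y - z)"
    and sc: "\<And>y z. y \<in> U \<Longrightarrow> z \<in> U \<Longrightarrow> h z \<ge> h y + inner (G y) (z - y) + \<mu> / 2 * norm (z - y) ^ 2"
    and mu: "0 < \<mu>" "\<mu> \<le> L" and Lam: "L < \<Lambda>"
    and vU: "v \<in> U" and wU: "w \<in> U" and bv: "cball v R \<subseteq> U" and bw: "cball w R \<subseteq> U"
    and close: "(L + \<mu>) * norm (w - v) \<le> (\<Lambda> - \<mu>) * R"
  shows "norm (G w - G v) ^ 2 + \<mu> * \<Lambda> * norm (w - v) ^ 2 \<le> (\<Lambda> + \<mu>) * inner (G w - G v) (w - v)"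
proof -
  define K where "K = \<Lambda> - \<mu>"
  have K: "K > 0" using mu Lam by (simp add: K_def)
  define \<phi> where "\<phi> x = h x - \<mu> / 2 * norm x ^ 2" for x
  define H where "H x = G x - \<mu> *\<^sub>R x" for x
  have ident: "\<phi> y - \<phi> x - inner (H x) (y - x) = h y - h x - inner (G x) (y - x) - \<mu> / 2 * norm (y - x) ^ 2" for x y
    unfolding \<phi>_def H_def norm_diff_sq
    by (simp add: inner_diff_left inner_diff_right power2_norm_eq_inner algebra_simps)
  have conv: "\<phi> y \<ge> \<phi> x + inner (H x) (y - x)" if "x \<in> U" "y \<in> U" for x y
    using sc[OF that] ident[of y x] by linarith
  have desc: "\<phi> y \<le> \<phi> x + inner (H x) (y - x) + K / 2 * norm (y - x) ^ 2"
    if "closed_segment x y \<subseteq> U" for x y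
  proof -
    have "h y \<le> h x + inner (G x) (y - x) + L / 2 * norm (y - x) ^ 2"
      by (rule descent[OF deriv lip that])
    moreover have "L / 2 * norm (y - x) ^ 2 - \<mu> / 2 * norm (y - x) ^ 2 \<le> K / 2 * norm (y - x) ^ 2"
      using Lam by (auto simp: K_def algebra_simps intro!: mult_right_mono)
    ultimately show ?thesis using ident[of y x] by linarith
  qed
  have Hb: "norm (H w - H v) \<le> (L + \<mu>) * norm (w - v)"
  proof -
    have "H w - H v = (G w - G v) - \<mu> *\<^sub>R (w - v)" by (simp add: H_def algebra_simps)
    then have "norm (H w - H v) \<le> norm (G w - G v) + norm (\<mu> *\<^sub>R (w - v))"
      by (metis norm_triangle_ineq4)
    also have "\<dots> \<le> L * norm (w - v) + \<mu> * norm (w - v)"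
      using lip[OF wU vU] mu by simp
    finally show ?thesis by (simp add: algebra_simps)
  qed
  have small: "norm ((1 / K) *\<^sub>R (H w - H v)) \<le> R"
  proof -
    have "norm ((1 / K) *\<^sub>R (H w - H v)) = norm (H w - H v) / K" using K by simp
    also have "\<dots> \<le> (L + \<mu>) * norm (w - v) / K" using Hb K by (simp add: divide_right_mono)
    also have "\<dots> \<le> R" using close K by (simp add: K_def pos_divide_le_eq mult.commute)
    finally show ?thesis .
  qed
  have R0: "0 \<le> R" using small by (meson norm_ge_zero order_trans)
  have s1: "closed_segment w (w - (1 / K) *\<^sub>R (H w - H v)) \<subseteq> U"
  proof -
    have "w - (1 / K) *\<^sub>R (H w - H v) \<in> cball w R" using small by (simp add: dist_norm)
    moreover have "w \<in> cball w R" using R0 by simp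
    ultimately have "closed_segment w (w - (1 / K) *\<^sub>R (H w - H v)) \<subseteq> cball w R"
      by (simp add: closed_segment_subset)
    then show ?thesis using bw by blast
  qed
  have s2: "closed_segment v (v - (1 / K) *\<^sub>R (H v - H w)) \<subseteq> U"
  proof -
    have n: "norm ((1 / K) *\<^sub>R (H v - H w)) = norm ((1 / K) *\<^sub>R (H w - H v))"
      by (simp add: norm_minus_commute)
    have "v - (1 / K) *\<^sub>R (H v - H w) \<in> cball v R" using small norm_minus_commute[of "H v" "H w"] by (simp add: dist_norm)
    moreover have "v \<in> cball v R" using R0 by simp
    ultimately have "closed_segment v (v - (1 / K) *\<^sub>R (H v - H w)) \<subseteq> cball v R"
      by (simp add: closed_segment_subset)
    then show ?thesis using bv by blast
  qed
  have cc: "norm (H w - H v) ^ 2 \<le> K * inner (H w - H v) (w - v)"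
    by (rule cocoercive_local[OF conv desc K vU wU s1 s2])
  define a where "a = G w - G v"
  define u where "u = w - v"
  have Hab: "H w - H v = a - \<mu> *\<^sub>R u" by (simp add: H_def a_def u_def algebra_simps)
  have e1: "norm (a - \<mu> *\<^sub>R u) ^ 2 = norm a ^ 2 - 2 * \<mu> * inner a u + \<mu> ^ 2 * norm u ^ 2"
    unfolding power2_norm_eq_inner
    by (simp add: inner_diff_left inner_diff_right inner_commute[of u a] power2_eq_square algebra_simps)
  have e2: "inner (a - \<mu> *\<^sub>R u) u = inner a u - \<mu> * norm u ^ 2"
    by (simp add: power2_norm_eq_inner inner_diff_left)
  have "norm a ^ 2 - 2 * \<mu> * inner a u + \<mu> ^ 2 * norm u ^ 2 \<le> K * (inner a u - \<mu> * norm u ^ 2)"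
    using cc unfolding Hab e1 u_def[symmetric] e2 .
  then have "norm a ^ 2 + \<mu> * \<Lambda> * norm u ^ 2 \<le> (\<Lambda> + \<mu>) * inner a u"
    by (simp add: K_def algebra_simps power2_eq_square)
  then show ?thesis by (simp add: a_def u_def)
qed

lemma glob:
  fixes F :: "'a::real_normed_vector \<Rightarrow> 'b::real_normed_vector"
  assumes d: "\<delta> > 0"
    and loc: "\<And>p q. p \<in> closed_segment y c \<Longrightarrow> q \<in> closed_segment y c \<Longrightarrow> norm (p - q) \<le> \<delta>
               \<Longrightarrow> norm (F p - F q) \<le> \<kappa> * norm (p - q)"
  shows "norm (F c - F y) \<le> \<kappa> * norm (c - y)"
proof -
  obtain N :: nat where N: "norm (c - y) / \<delta> < real N" using reals_Archimedean2 by blast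
  have Npos: "real N > 0" using N d by (smt (verit) divide_nonneg_pos norm_ge_zero)
  define p where "p j = y + (real j / real N) *\<^sub>R (c - y)" for j
  have pc: "p N = c" using Npos by (simp add: p_def)
  have py: "p 0 = y" by (simp add: p_def)
  have pseg: "p j \<in> closed_segment y c" if "j \<le> N" for j
  proof -
    have "0 \<le> real j / real N" "real j / real N \<le> 1" using that Npos by auto
    moreover have "p j = (1 - real j / real N) *\<^sub>R y + (real j / real N) *\<^sub>R c"
      by (simp add: p_def algebra_simps)
    ultimately show ?thesis unfolding in_segment by blast
  qed
  have step: "p (Suc j) - p j = (1 / real N) *\<^sub>R (c - y)" for j
  proof -
    have "p (Suc j) - p j = (real (Suc j) / real N - real j / real N) *\<^sub>R (c - y)"
      unfolding p_def by (simp only: scaleR_diff_left) simp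
    also have "real (Suc j) / real N - real j / real N = 1 / real N"
      by (simp add: diff_divide_distrib[symmetric])
    finally show ?thesis .
  qed
  have stepn: "norm (p (Suc j) - p j) = norm (c - y) / real N" for j
    using Npos unfolding step by simp
  have small: "norm (c - y) / real N \<le> \<delta>"
    using N d Npos by (simp add: divide_le_eq mult.commute pos_divide_less_eq)
  have "F c - F y = (\<Sum>j<N. F (p (Suc j)) - F (p j))"
    using sum_lessThan_telescope[of "\<lambda>j. F (p j)" N] pc py by simp
  then have "norm (F c - F y) \<le> (\<Sum>j<N. norm (F (p (Suc j)) - F (p j)))"
    by (simp add: norm_sum)
  also have "\<dots> \<le> (\<Sum>j<N. \<kappa> * (norm (c - y) / real N))"
  proof (rule sum_mono)
    fix j assume "j \<in> {..<N}"
    then have "Suc j \<le> N" "j \<le> N" by auto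
    then show "norm (F (p (Suc j)) - F (p j)) \<le> \<kappa> * (norm (c - y) / real N)"
      using loc[OF pseg pseg] stepn small by metis
  qed
  also have "\<dots> = \<kappa> * norm (c - y)" using Npos by simp
  finally show ?thesis .
qed

lemma ring_aux2: "(k::real) ^ 2 * (R - 2 * s * I + s ^ 2 * A) = k ^ 2 * R - 2 * k * (k * s) * I + (k * s) ^ 2 * A"
  by (simp add: power2_eq_square algebra_simps)

lemma QT_identity:
  fixes a u :: "'a::real_inner"
  assumes "\<Lambda> + \<mu> > 0"
  shows "(\<Lambda> + \<mu>) ^ 2 * norm (u - (2 / (\<Lambda> + \<mu>)) *\<^sub>R a) ^ 2
       = (\<Lambda> - \<mu>) ^ 2 * norm u ^ 2 + 4 * (norm a ^ 2 + \<mu> * \<Lambda> * norm u ^ 2 - (\<Lambda> + \<mu>) * inner a u)"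
proof -
  define s where "s = 2 / (\<Lambda> + \<mu>)"
  have "norm (u - s *\<^sub>R a) ^ 2 = norm u ^ 2 - 2 * s * inner a u + s ^ 2 * norm a ^ 2"
    unfolding power2_norm_eq_inner
    by (simp add: inner_diff_left inner_diff_right inner_commute[of u a] power2_eq_square algebra_simps)
  then have "(\<Lambda> + \<mu>) ^ 2 * norm (u - s *\<^sub>R a) ^ 2
      = (\<Lambda> + \<mu>) ^ 2 * norm u ^ 2 - 2 * (\<Lambda> + \<mu>) * ((\<Lambda> + \<mu>) * s) * inner a u + ((\<Lambda> + \<mu>) * s) ^ 2 * norm a ^ 2"
    by (simp only: ring_aux2)
  moreover have "(\<Lambda> + \<mu>) * s = 2" using assms by (simp add: s_def field_simps)
  ultimately have "(\<Lambda> + \<mu>) ^ 2 * norm (u - s *\<^sub>R a) ^ 2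
      = (\<Lambda> + \<mu>) ^ 2 * norm u ^ 2 - 4 * (\<Lambda> + \<mu>) * inner a u + 4 * norm a ^ 2"
    by simp
  then show ?thesis unfolding s_def
    by (simp add: power2_eq_square algebra_simps)
qed

lemma QT:
  fixes a u :: "'a::real_inner"
  assumes pos: "\<Lambda> + \<mu> > 0" "\<Lambda> - \<mu> \<ge> 0"
  shows "norm a ^ 2 + \<mu> * \<Lambda> * norm u ^ 2 \<le> (\<Lambda> + \<mu>) * inner a u
     \<longleftrightarrow> norm (u - (2 / (\<Lambda> + \<mu>)) *\<^sub>R a) \<le> (\<Lambda> - \<mu>) / (\<Lambda> + \<mu>) * norm u"
proof -
  have "norm (u - (2 / (\<Lambda> + \<mu>)) *\<^sub>R a) \<le> (\<Lambda> - \<mu>) / (\<Lambda> + \<mu>) * norm u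
     \<longleftrightarrow> (\<Lambda> + \<mu>) * norm (u - (2 / (\<Lambda> + \<mu>)) *\<^sub>R a) \<le> (\<Lambda> - \<mu>) * norm u"
    using pos by (simp add: field_simps)
  also have "\<dots> \<longleftrightarrow> ((\<Lambda> + \<mu>) * norm (u - (2 / (\<Lambda> + \<mu>)) *\<^sub>R a)) ^ 2 \<le> ((\<Lambda> - \<mu>) * norm u) ^ 2"
  proof -
    have x0: "0 \<le> (\<Lambda> + \<mu>) * norm (u - (2 / (\<Lambda> + \<mu>)) *\<^sub>R a)" using pos by simp
    have y0: "0 \<le> (\<Lambda> - \<mu>) * norm u" using pos by simp
    show ?thesis
    proof
      assume "(\<Lambda> + \<mu>) * norm (u - (2 / (\<Lambda> + \<mu>)) *\<^sub>R a) \<le> (\<Lambda> - \<mu>) * norm u"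
      then show "((\<Lambda> + \<mu>) * norm (u - (2 / (\<Lambda> + \<mu>)) *\<^sub>R a))\<^sup>2 \<le> ((\<Lambda> - \<mu>) * norm u)\<^sup>2"
        using x0 by (rule power_mono)
    next
      assume "((\<Lambda> + \<mu>) * norm (u - (2 / (\<Lambda> + \<mu>)) *\<^sub>R a))\<^sup>2 \<le> ((\<Lambda> - \<mu>) * norm u)\<^sup>2"
      then show "(\<Lambda> + \<mu>) * norm (u - (2 / (\<Lambda> + \<mu>)) *\<^sub>R a) \<le> (\<Lambda> - \<mu>) * norm u"
        using y0 by (rule power2_le_imp_le)
    qed
  qed
  also have "\<dots> \<longleftrightarrow> norm a ^ 2 + \<mu> * \<Lambda> * norm u ^ 2 \<le> (\<Lambda> + \<mu>) * inner a u"
    unfolding power_mult_distrib QT_identity[OF pos(1)] by simp (smt (verit))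
  finally show ?thesis by simp
qed

lemma coco_global_h:
  fixes h :: "'a::euclidean_space \<Rightarrow> real" and G :: "'a \<Rightarrow> 'a"
  assumes U: "open U"
    and deriv: "\<And>y. y \<in> U \<Longrightarrow> (h has_derivative (\<lambda>d. inner (G y) d)) (at y)"
    and lip: "\<And>y z. y \<in> U \<Longrightarrow> z \<in> U \<Longrightarrow> norm (G y - G z) \<le> L * norm (y - z)"
    and sc: "\<And>y z. y \<in> U \<Longrightarrow> z \<in> U \<Longrightarrow> h z \<ge> h y + inner (G y) (z - y) + \<mu> / 2 * norm (z - y) ^ 2"
    and mu: "0 < \<mu>" "\<mu> \<le> L" and Lam: "L < \<Lambda>"
    and seg: "closed_segment v w \<subseteq> U"
  shows "norm (G w - G v) ^ 2 + \<mu> * \<Lambda> * norm (w - v) ^ 2 \<le> (\<Lambda> + \<mu>) * inner (G w - G v) (w - v)"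
proof -
  obtain R where R: "R > 0" "(\<Union>x\<in>closed_segment v w. cball x R) \<subseteq> U"
    using compact_subset_open_imp_cball_epsilon_subset[OF compact_segment U seg] by blast
  define \<delta> where "\<delta> = (\<Lambda> - \<mu>) * R / (L + \<mu>)"
  have d: "\<delta> > 0" using R mu Lam by (simp add: \<delta>_def)
  define F where "F x = x - (2 / (\<Lambda> + \<mu>)) *\<^sub>R G x" for x
  have pos: "\<Lambda> + \<mu> > 0" "\<Lambda> - \<mu> \<ge> 0" using mu Lam by auto
  have FW: "norm (F w - F v) \<le> (\<Lambda> - \<mu>) / (\<Lambda> + \<mu>) * norm (w - v)"
  proof (rule glob[OF d])
    fix p q assume p: "p \<in> closed_segment v w" and q: "q \<in> closed_segment v w" and pq: "norm (p - q) \<le> \<delta>"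
    have pU: "p \<in> U" and qU: "q \<in> U" using p q seg by auto
    have bp: "cball p R \<subseteq> U" and bq: "cball q R \<subseteq> U" using R p q by auto
    have close: "(L + \<mu>) * norm (p - q) \<le> (\<Lambda> - \<mu>) * R"
      using pq mu by (simp add: \<delta>_def pos_le_divide_eq mult.commute)
    have "norm (G p - G q) ^ 2 + \<mu> * \<Lambda> * norm (p - q) ^ 2 \<le> (\<Lambda> + \<mu>) * inner (G p - G q) (p - q)"
      by (rule coco_local_h[OF deriv lip sc mu Lam qU pU bq bp close])
    then have "norm ((p - q) - (2 / (\<Lambda> + \<mu>)) *\<^sub>R (G p - G q)) \<le> (\<Lambda> - \<mu>) / (\<Lambda> + \<mu>) * norm (p - q)"
      using QT[OF pos] by blast
    moreover have "F p - F q = (p - q) - (2 / (\<Lambda> + \<mu>)) *\<^sub>R (G p - G q)"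
      by (simp add: F_def algebra_simps)
    ultimately show "norm (F p - F q) \<le> (\<Lambda> - \<mu>) / (\<Lambda> + \<mu>) * norm (p - q)" by simp
  qed
  have eq: "F w - F v = (w - v) - (2 / (\<Lambda> + \<mu>)) *\<^sub>R (G w - G v)"
    by (simp add: F_def algebra_simps)
  have T: "norm ((w - v) - (2 / (\<Lambda> + \<mu>)) *\<^sub>R (G w - G v)) \<le> (\<Lambda> - \<mu>) / (\<Lambda> + \<mu>) * norm (w - v)"
    using FW unfolding eq .
  show ?thesis using T QT[OF pos, of "G w - G v" "w - v"] by blast
qed

lemma coco_h:
  fixes h :: "'a::euclidean_space \<Rightarrow> real" and G :: "'a \<Rightarrow> 'a"
  assumes U: "open U"
    and deriv: "\<And>y. y \<in> U \<Longrightarrow> (h has_derivative (\<lambda>d. inner (G y) d)) (at y)"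
    and lip: "\<And>y z. y \<in> U \<Longrightarrow> z \<in> U \<Longrightarrow> norm (G y - G z) \<le> L * norm (y - z)"
    and sc: "\<And>y z. y \<in> U \<Longrightarrow> z \<in> U \<Longrightarrow> h z \<ge> h y + inner (G y) (z - y) + \<mu> / 2 * norm (z - y) ^ 2"
    and mu: "0 < \<mu>" "\<mu> \<le> L"
    and seg: "closed_segment v w \<subseteq> U"
  shows "norm (G w - G v) ^ 2 + \<mu> * L * norm (w - v) ^ 2 \<le> (L + \<mu>) * inner (G w - G v) (w - v)"
proof -
  define A where "A = norm (G w - G v) ^ 2"
  define B where "B = norm (w - v) ^ 2"
  define C where "C = inner (G w - G v) (w - v)"
  have H: "A + \<mu> * (L + e) * B \<le> (L + e + \<mu>) * C" if "e > 0" for e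
  proof -
    have "L < L + e" using that by simp
    from coco_global_h[OF U deriv lip sc mu this seg] show ?thesis
      unfolding A_def B_def C_def by (simp add: algebra_simps)
  qed
  show ?thesis unfolding A_def[symmetric] B_def[symmetric] C_def[symmetric]
  proof (rule ccontr)
    assume "\<not> A + \<mu> * L * B \<le> (L + \<mu>) * C"
    then have gap: "A + \<mu> * L * B - (L + \<mu>) * C > 0" by simp
    have B0: "B \<ge> 0" unfolding B_def by simp
    define e where "e = (A + \<mu> * L * B - (L + \<mu>) * C) / (2 * (\<bar>C\<bar> + 1))"
    have e0: "e > 0" using gap by (simp add: e_def)
    have "A + \<mu> * L * B - (L + \<mu>) * C \<le> e * (C - \<mu> * B)"
      using H[OF e0] by (simp add: algebra_simps)
    also have "\<dots> \<le> e * \<bar>C\<bar>"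
    proof -
      have "\<mu> * B \<ge> 0" using mu B0 by simp
      then have "C - \<mu> * B \<le> \<bar>C\<bar>" by linarith
      then show ?thesis using e0 by (intro mult_left_mono) auto
    qed
    also have "\<dots> < e * (2 * (\<bar>C\<bar> + 1))" using e0 by (intro mult_strict_left_mono) auto
    also have "\<dots> = A + \<mu> * L * B - (L + \<mu>) * C" by (simp add: e_def)
    finally show False by simp
  qed
qed

lemma caseA_alg:
  fixes a e u :: "'a::real_inner"
  assumes a0: "a \<noteq> 0" and k0: "k \<ge> 0" and ek: "norm e \<le> k"
    and au: "inner a u \<ge> k * norm a" and aeu: "inner a (e + u) \<le> 0"
  shows "norm (e + u) ^ 2 \<le> norm u ^ 2 - (k ^ 2)"
proof -
  define A where "A = norm a"
  have A0: "A > 0" using a0 by (simp add: A_def)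
  have ae: "inner a e \<le> - (k * A)" using au aeu by (simp add: inner_add_right A_def)
  have ee: "inner e e = norm e ^ 2" by (simp add: power2_norm_eq_inner)
  have aa: "inner a a = A ^ 2" by (simp add: power2_norm_eq_inner A_def)
  have "norm (A *\<^sub>R e + k *\<^sub>R a) ^ 2 = inner (A *\<^sub>R e + k *\<^sub>R a) (A *\<^sub>R e + k *\<^sub>R a)"
    by (rule power2_norm_eq_inner)
  also have "\<dots> = A ^ 2 * inner e e + 2 * k * A * inner a e + k ^ 2 * inner a a"
    by (simp add: inner_add_left inner_add_right inner_commute[of e a] power2_eq_square algebra_simps)
  also have "\<dots> = A ^ 2 * norm e ^ 2 + 2 * k * A * inner a e + k ^ 2 * A ^ 2"
    by (simp only: ee aa)
  also have "\<dots> \<le> A ^ 2 * k ^ 2 + 2 * k * A * (- (k * A)) + k ^ 2 * A ^ 2"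
  proof -
    have "A ^ 2 * norm e ^ 2 \<le> A ^ 2 * k ^ 2"
      using ek by (intro mult_left_mono power_mono) auto
    moreover have "2 * k * A * inner a e \<le> 2 * k * A * (- (k * A))"
      using ae k0 A0 by (intro mult_left_mono) auto
    ultimately show ?thesis by linarith
  qed
  also have "\<dots> = 0" by (simp add: power2_eq_square algebra_simps)
  finally have "A *\<^sub>R e + k *\<^sub>R a = 0" by simp
  then have "A *\<^sub>R e = - (k *\<^sub>R a)" by (simp add: eq_neg_iff_add_eq_0)
  then have "(1 / A) *\<^sub>R (A *\<^sub>R e) = (1 / A) *\<^sub>R (- (k *\<^sub>R a))" by simp
  then have e: "e = - (k / A) *\<^sub>R a" using A0 by simp
  have ne: "norm e ^ 2 = k ^ 2" using e A0 k0 by (simp add: A_def power_mult_distrib)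
  have "inner e u = - (k / A) * inner a u" using e by simp
  also have "\<dots> \<le> - (k / A) * (k * A)"
    using au k0 A0 by (intro mult_left_mono_neg) (auto simp: A_def)
  also have "\<dots> = - (k ^ 2)" using A0 by (simp add: power2_eq_square)
  finally have eu: "inner e u \<le> - (k ^ 2)" .
  have "norm (e + u) ^ 2 = norm e ^ 2 + 2 * inner e u + norm u ^ 2"
    unfolding power2_norm_eq_inner by (simp add: inner_add_left inner_add_right inner_commute[of u e])
  then show ?thesis using ne eu by linarith
qed

lemma caseB_alg:
  fixes e u :: "'a::real_inner"
  assumes ek: "norm e = k" and p: "inner e (- (e + u)) \<ge> 0"
  shows "norm (e + u) ^ 2 \<le> norm u ^ 2 - (k ^ 2)"
proof -
  have "inner e (- (e + u)) = - (norm e ^ 2) - inner e u"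
    by (simp add: inner_add_right inner_diff_right power2_norm_eq_inner)
  moreover have "norm e ^ 2 = k ^ 2" using ek by simp
  ultimately have eu: "inner e u \<le> - (k ^ 2)" using p by linarith
  have "norm (e + u) ^ 2 = norm e ^ 2 + 2 * inner e u + norm u ^ 2"
    unfolding power2_norm_eq_inner by (simp add: inner_add_left inner_add_right inner_commute[of u e])
  then show ?thesis using ek eu by simp
qed

lemma small_step:
  fixes e d :: "'a::real_inner"
  assumes et: "norm e \<le> t" and d0: "d \<noteq> 0" and nb: "\<not> (norm e = t \<and> inner e d \<ge> 0)"
  shows "\<exists>s. 0 < s \<and> s \<le> 1 \<and> norm (e + s *\<^sub>R d) \<le> t"
proof -
  define D where "D = norm d ^ 2"
  define p where "p = inner e d"
  have D0: "D > 0" using d0 by (simp add: D_def)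
  have t0: "t \<ge> 0" using et norm_ge_zero order_trans by blast
  have sq: "norm (e + s *\<^sub>R d) ^ 2 = norm e ^ 2 + 2 * s * p + s ^ 2 * D" for s
    unfolding power2_norm_eq_inner D_def p_def
    by (simp add: inner_add_left inner_add_right inner_commute[of d e] power2_eq_square algebra_simps)
  have "\<exists>s. 0 < s \<and> s \<le> 1 \<and> 2 * s * p + s ^ 2 * D \<le> t ^ 2 - norm e ^ 2"
  proof (cases "p < 0")
    case True
    define s where "s = min 1 (- p / D)"
    have s0: "s > 0" "s \<le> 1" using True D0 by (auto simp: s_def divide_neg_pos)
    have "s * D \<le> - p / D * D" using D0 by (intro mult_right_mono) (auto simp: s_def)
    also have "\<dots> = - p" using D0 by simp
    finally have "s * D \<le> - p" .
    then have "s * (s * D) \<le> s * (- p)" using s0 by (intro mult_left_mono) auto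
    then have "2 * s * p + s ^ 2 * D \<le> s * p" by (simp add: power2_eq_square algebra_simps)
    also have "\<dots> \<le> 0" using s0 True by (intro mult_nonneg_nonpos) auto
    also have "0 \<le> t ^ 2 - norm e ^ 2" using et by (simp add: power_mono)
    finally show ?thesis using s0 by blast
  next
    case False
    then have "norm e \<noteq> t" using nb by (auto simp: p_def)
    then have "norm e < t" using et by simp
    then have dl: "t ^ 2 - norm e ^ 2 > 0" by (simp add: power_strict_mono)
    define \<delta> where "\<delta> = t ^ 2 - norm e ^ 2"
    define s where "s = min 1 (\<delta> / (2 * p + D))"
    have pD: "2 * p + D > 0" using False D0 by simp
    have s0: "s > 0" "s \<le> 1" using dl pD by (auto simp: s_def \<delta>_def)
    have "s ^ 2 * D \<le> s * D" using s0 D0 by (simp add: power2_eq_square mult_left_le_one_le)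
    moreover have "s * (2 * p + D) \<le> \<delta>"
    proof -
      have "s * (2 * p + D) \<le> \<delta> / (2 * p + D) * (2 * p + D)" using pD by (intro mult_right_mono) (auto simp: s_def)
      also have "\<dots> = \<delta>" using pD by simp
      finally show ?thesis .
    qed
    ultimately have "2 * s * p + s ^ 2 * D \<le> \<delta>" by (simp add: algebra_simps)
    then show ?thesis using s0 by (auto simp: \<delta>_def)
  qed
  then obtain s where s: "0 < s" "s \<le> 1" "2 * s * p + s ^ 2 * D \<le> t ^ 2 - norm e ^ 2" by blast
  then have "norm (e + s *\<^sub>R d) ^ 2 \<le> t ^ 2" using sq by simp
  then have "norm (e + s *\<^sub>R d) \<le> t" using t0 by (rule power2_le_imp_le)
  then show ?thesis using s by blast
qed

lemma vi:
  fixes h :: "'a::euclidean_space \<Rightarrow> real" and G :: "'a \<Rightarrow> 'a"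
  assumes deriv: "\<And>y. y \<in> U \<Longrightarrow> (h has_derivative (\<lambda>d. inner (G y) d)) (at y)"
    and lip: "\<And>y z. y \<in> U \<Longrightarrow> z \<in> U \<Longrightarrow> norm (G y - G z) \<le> L * norm (y - z)"
    and X: "convex X" "X \<subseteq> U" and L0: "L \<ge> 0"
    and cX: "c \<in> X" and cmin: "\<And>v. v \<in> X \<Longrightarrow> h c \<le> h v" and vX: "v \<in> X"
  shows "inner (G c) (v - c) \<ge> 0"
proof (rule ccontr)
  define I where "I = inner (G c) (v - c)"
  define N where "N = norm (v - c) ^ 2"
  assume "\<not> inner (G c) (v - c) \<ge> 0"
  then have I0: "I < 0" by (simp add: I_def)
  have N0: "N \<ge> 0" by (simp add: N_def)
  have LN: "L * N + 1 > 0" using L0 N0 by (simp add: add_nonneg_pos)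
  define s where "s = min 1 (- I / (L * N + 1))"
  have s0: "s > 0" "s \<le> 1" using I0 LN by (auto simp: s_def divide_neg_pos)
  define p where "p = c + s *\<^sub>R (v - c)"
  have "p = (1 - s) *\<^sub>R c + s *\<^sub>R v" by (simp add: p_def algebra_simps)
  then have pX: "p \<in> X" using X(1) cX vX s0 by (simp add: convexD)
  have "closed_segment c p \<subseteq> X" using X(1) cX pX by (simp add: closed_segment_subset)
  then have seg: "closed_segment c p \<subseteq> U" using X(2) by blast
  have "h p \<le> h c + inner (G c) (p - c) + L / 2 * norm (p - c) ^ 2"
    by (rule descent[OF deriv lip seg])
  moreover have "inner (G c) (p - c) = s * I" by (simp add: p_def I_def)
  moreover have "L / 2 * norm (p - c) ^ 2 = L / 2 * (s ^ 2 * N)" using s0 by (simp add: p_def N_def power_mult_distrib)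
  moreover have "h c \<le> h p" using cmin pX by blast
  ultimately have "0 \<le> s * I + L / 2 * (s ^ 2 * N)" by linarith
  also have "s * I + L / 2 * (s ^ 2 * N) = s * (I + L * s * N / 2)" by (simp add: power2_eq_square algebra_simps)
  finally have "0 \<le> I + L * s * N / 2" using s0 by (simp add: zero_le_mult_iff)
  moreover have "s * (L * N + 1) \<le> - I"
  proof -
    have "s * (L * N + 1) \<le> - I / (L * N + 1) * (L * N + 1)" using LN by (intro mult_right_mono) (auto simp: s_def)
    also have "\<dots> = - I" using LN by simp
    finally show ?thesis .
  qed
  moreover have "L * s * N \<le> s * (L * N + 1)" using s0 by (simp add: algebra_simps)
  ultimately show False using I0 by linarith
qed

lemma contract:
  fixes h :: "'a::euclidean_space \<Rightarrow> real" and G :: "'a \<Rightarrow> 'a"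
  assumes U: "open U"
    and X: "convex X" "X \<subseteq> U"
    and deriv: "\<And>y. y \<in> U \<Longrightarrow> (h has_derivative (\<lambda>d. inner (G y) d)) (at y)"
    and lip: "\<And>y z. y \<in> U \<Longrightarrow> z \<in> U \<Longrightarrow> norm (G y - G z) \<le> L * norm (y - z)"
    and sc: "\<And>y z. y \<in> U \<Longrightarrow> z \<in> U \<Longrightarrow> h z \<ge> h y + inner (G y) (z - y) + \<mu> / 2 * norm (z - y) ^ 2"
    and mu: "0 < \<mu>" "\<mu> \<le> L"
    and cmin: "is_arg_min h (\<lambda>y. y \<in> X) c"
    and yX: "y \<in> X"
    and zmin: "is_arg_min (\<lambda>z. inner (G y) z)
                 (\<lambda>z. z \<in> X \<inter> cball y ((2 * sqrt (\<mu> * L) / (L + \<mu>)) * norm (y - c))) z"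
  shows "norm (z - c) ^ 2 \<le> ((L - \<mu>) / (L + \<mu>)) ^ 2 * norm (y - c) ^ 2"
proof -
  define \<theta> where "\<theta> = 2 * sqrt (\<mu> * L) / (L + \<mu>)"
  define r where "r = norm (y - c)"
  define k where "k = \<theta> * r"
  have Lmu: "L + \<mu> > 0" using mu by simp
  have th0: "\<theta> \<ge> 0" using mu by (simp add: \<theta>_def)
  have r0: "r \<ge> 0" by (simp add: r_def)
  have k0: "k \<ge> 0" using th0 r0 by (simp add: k_def)
  have sq: "sqrt (\<mu> * L) ^ 2 = \<mu> * L" using mu by simp
  have rho: "((L - \<mu>) / (L + \<mu>)) ^ 2 * r ^ 2 = r ^ 2 - k ^ 2"
  proof -
    have "k ^ 2 = 4 * (\<mu> * L) * r ^ 2 / (L + \<mu>) ^ 2"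
      unfolding k_def \<theta>_def by (simp add: power_mult_distrib power_divide sq)
    moreover have "((L - \<mu>) / (L + \<mu>)) ^ 2 * r ^ 2 = (L - \<mu>) ^ 2 * r ^ 2 / (L + \<mu>) ^ 2"
      by (simp add: power_divide)
    moreover have "(L - \<mu>) ^ 2 * r ^ 2 = (L + \<mu>) ^ 2 * r ^ 2 - 4 * (\<mu> * L) * r ^ 2"
      by (simp add: power2_eq_square algebra_simps)
    ultimately show ?thesis using Lmu by (simp add: diff_divide_distrib)
  qed
  have cX: "c \<in> X" and cm: "\<And>v. v \<in> X \<Longrightarrow> h c \<le> h v"
    using cmin by (auto simp: is_arg_min_def not_less)
  have zX: "z \<in> X" and zt: "dist y z \<le> k"
    using zmin by (auto simp: is_arg_min_def k_def \<theta>_def r_def)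
  have zopt: "\<And>w. w \<in> X \<Longrightarrow> dist y w \<le> k \<Longrightarrow> inner (G y) z \<le> inner (G y) w"
    using zmin by (auto simp: is_arg_min_def k_def \<theta>_def r_def not_less)
  define e where "e = z - y"
  define u where "u = y - c"
  have zc: "z - c = e + u" by (simp add: e_def u_def)
  have ek: "norm e \<le> k" using zt by (simp add: e_def dist_norm norm_minus_commute)
  have ur: "norm u = r" by (simp add: u_def r_def)
  have main: "norm (e + u) ^ 2 \<le> norm u ^ 2 - k ^ 2"
  proof (cases "r = 0")
    case True
    then have "k = 0" by (simp add: k_def)
    then have "e = 0" using ek by simp
    moreover have "u = 0" using True ur by simp
    ultimately show ?thesis using \<open>k = 0\<close> by simp
  next
    case False
    then have rpos: "r > 0" using r0 by simp
    show ?thesis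
    proof (cases "norm e = k \<and> inner e (c - z) \<ge> 0")
      case True
      then show ?thesis using caseB_alg[of e k u] by (simp add: zc[symmetric] minus_diff_eq)
    next
      case nb: False
      have gyz: "inner (G y) (c - z) \<ge> 0"
      proof (cases "c = z")
        case True then show ?thesis by simp
      next
        case False
        then have d0: "c - z \<noteq> 0" by simp
        have nb': "\<not> (norm e = k \<and> inner e (c - z) \<ge> 0)" using nb by simp
        obtain s where s: "0 < s" "s \<le> 1" "norm (e + s *\<^sub>R (c - z)) \<le> k"
          using small_step[OF ek d0 nb'] by blast
        define w where "w = z + s *\<^sub>R (c - z)"
        have "w = (1 - s) *\<^sub>R z + s *\<^sub>R c" by (simp add: w_def algebra_simps)
        then have wX: "w \<in> X" using X(1) zX cX s by (simp add: convexD)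
        have "dist y w = norm (e + s *\<^sub>R (c - z))"
          by (simp add: dist_norm w_def e_def norm_minus_commute algebra_simps)
        then have "dist y w \<le> k" using s by simp
        then have "inner (G y) z \<le> inner (G y) w" using zopt wX by blast
        then have "0 \<le> s * inner (G y) (c - z)" by (simp add: w_def inner_add_right)
        then show ?thesis using s by (simp add: zero_le_mult_iff)
      qed
      have L0: "L \<ge> 0" using mu by simp
      have gcz: "inner (G c) (z - c) \<ge> 0"
        by (rule vi[OF deriv lip X L0 cX cm zX])
      define a where "a = G y - G c"
      have aeu: "inner a (e + u) \<le> 0"
      proof -
        have "inner a (e + u) = - inner (G y) (c - z) - inner (G c) (z - c)"
          unfolding zc[symmetric] a_def by (simp add: inner_diff_left inner_diff_right algebra_simps)
        then show ?thesis using gyz gcz by linarith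
      qed
      have seg: "closed_segment c y \<subseteq> U"
        using X cX yX by (meson closed_segment_subset order_trans)
      have cc: "norm a ^ 2 + \<mu> * L * r ^ 2 \<le> (L + \<mu>) * inner a u"
        using coco_h[OF U deriv lip sc mu seg] by (simp add: a_def u_def r_def)
      have a0: "a \<noteq> 0"
      proof
        assume "a = 0"
        then have "\<mu> * L * r ^ 2 \<le> 0" using cc by simp
        moreover have "\<mu> * L * r ^ 2 > 0" using mu rpos by simp
        ultimately show False by simp
      qed
      have au: "inner a u \<ge> k * norm a"
      proof -
        have "0 \<le> (norm a - sqrt (\<mu> * L) * r) ^ 2" by simp
        also have "\<dots> = norm a ^ 2 + \<mu> * L * r ^ 2 - 2 * sqrt (\<mu> * L) * r * norm a"
        proof -
          have "L * \<mu> \<ge> 0" using mu by simp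
          then show ?thesis by (simp add: power2_eq_square algebra_simps)
        qed
        finally have "2 * sqrt (\<mu> * L) * r * norm a \<le> (L + \<mu>) * inner a u" using cc by linarith
        moreover have "k * norm a = 2 * sqrt (\<mu> * L) * r * norm a / (L + \<mu>)"
          by (simp add: k_def \<theta>_def)
        ultimately show ?thesis using Lmu by (simp add: pos_divide_le_eq mult.commute)
      qed
      show ?thesis by (rule caseA_alg[OF a0 k0 ek au aeu])
    qed
  qed
  show ?thesis using main rho zc ur by (simp add: r_def)
qed

theorem theorem13:
  fixes X U :: "'a::euclidean_space set"
    and n :: nat
    and f :: "nat \<Rightarrow> 'a \<Rightarrow> real"
    and g :: "nat \<Rightarrow> 'a \<Rightarrow> 'a"
    and \<mu> L :: "nat \<Rightarrow> real"
    and xstar :: 'a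
    and xs :: "nat \<Rightarrow> 'a"
    and x :: "nat list \<Rightarrow> 'a"
  assumes n_pos: "n \<ge> 1"
    and X_ne: "X \<noteq> {}" and X_closed: "closed X" and X_convex: "convex X"
    and U_open: "open U" and U_convex: "convex U" and XU: "X \<subseteq> U"
    and grad: "\<And>i y. i < n \<Longrightarrow> y \<in> U \<Longrightarrow>
                 (f i has_derivative (\<lambda>h. inner (g i y) h)) (at y)"
    and mu_pos: "\<And>i. i < n \<Longrightarrow> 0 < \<mu> i"
    and mu_le_L: "\<And>i. i < n \<Longrightarrow> \<mu> i \<le> L i"
    and strongly_convex: "\<And>i y z. i < n \<Longrightarrow> y \<in> U \<Longrightarrow> z \<in> U \<Longrightarrow>
                 f i z \<ge> f i y + inner (g i y) (z - y) + \<mu> i / 2 * norm (z - y) ^ 2"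
    and smooth: "\<And>i y z. i < n \<Longrightarrow> y \<in> U \<Longrightarrow> z \<in> U \<Longrightarrow>
                 norm (g i y - g i z) \<le> L i * norm (y - z)"
    and xstar_min: "is_arg_min (\<lambda>y. (1 / real n) * (\<Sum>i<n. f i y)) (\<lambda>y. y \<in> X) xstar"
    and xs_min: "\<And>i. i < n \<Longrightarrow> is_arg_min (f i) (\<lambda>y. y \<in> X) (xs i)"
    and x0: "x [] \<in> X"
    and step: "\<And>hs i. set hs \<subseteq> {..<n} \<Longrightarrow> i < n \<Longrightarrow>
                 is_arg_min (\<lambda>z. inner (g i (x hs)) z)
                   (\<lambda>z. z \<in> X \<inter> cball (x hs)
                        ((2 * sqrt (\<mu> i * L i) / (L i + \<mu> i)) * norm (x hs - xs i)))
                   (x (hs @ [i]))"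
  shows "(\<forall>hs i. set hs \<subseteq> {..<n} \<longrightarrow> i < n \<longrightarrow>
            norm (x (hs @ [i]) - xs i) ^ 2
              \<le> ((L i - \<mu> i) / (L i + \<mu> i)) ^ 2 * norm (x hs - xs i) ^ 2)
       \<and> (\<forall>k::nat.
            (let \<rho>bar = (1 / real n) * (\<Sum>i<n. (L i - \<mu> i) / (L i + \<mu> i));
                 D = Max ((\<lambda>i. norm (xs i - xstar)) ` {..<n})
             in (1 / real n ^ k) * (\<Sum>hs \<in> {hs. set hs \<subseteq> {..<n} \<and> length hs = k}.
                                        norm (x hs - xstar))
                \<le> \<rho>bar ^ k * norm (x [] - xstar) + (1 + \<rho>bar) / (1 - \<rho>bar) * D))"
proof -
  define \<rho> where "\<rho> i = (L i - \<mu> i) / (L i + \<mu> i)" for i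
  have xX: "set hs \<subseteq> {..<n} \<Longrightarrow> x hs \<in> X" for hs
  proof (induction hs rule: rev_induct)
    case Nil then show ?case using x0 by simp
  next
    case (snoc i hs)
    then have "set hs \<subseteq> {..<n}" "i < n" by auto
    from step[OF this] show ?case by (simp add: is_arg_min_def)
  qed
  have part1: "norm (x (hs @ [i]) - xs i) ^ 2 \<le> ((L i - \<mu> i) / (L i + \<mu> i)) ^ 2 * norm (x hs - xs i) ^ 2"
    if hs: "set hs \<subseteq> {..<n}" and i: "i < n" for hs i
  proof (rule contract[where U = U and X = X and h = "f i" and G = "g i"])
    show "open U" by (rule U_open)
    show "convex X" "X \<subseteq> U" by (rule X_convex, rule XU)
    show "\<And>y. y \<in> U \<Longrightarrow> (f i has_derivative (\<lambda>d. inner (g i y) d)) (at y)" using grad i by blast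
    show "\<And>y z. y \<in> U \<Longrightarrow> z \<in> U \<Longrightarrow> norm (g i y - g i z) \<le> L i * norm (y - z)" using smooth i by blast
    show "\<And>y z. y \<in> U \<Longrightarrow> z \<in> U \<Longrightarrow> f i z \<ge> f i y + inner (g i y) (z - y) + \<mu> i / 2 * norm (z - y) ^ 2"
      using strongly_convex i by blast
    show "0 < \<mu> i" "\<mu> i \<le> L i" using mu_pos mu_le_L i by auto
    show "is_arg_min (f i) (\<lambda>y. y \<in> X) (xs i)" using xs_min i by blast
    show "x hs \<in> X" using xX hs by blast
    show "is_arg_min (\<lambda>z. inner (g i (x hs)) z)
       (\<lambda>z. z \<in> X \<inter> cball (x hs) ((2 * sqrt (\<mu> i * L i) / (L i + \<mu> i)) * norm (x hs - xs i))) (x (hs @ [i]))"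
      using step hs i by blast
  qed
  define \<rho>bar where "\<rho>bar = (1 / real n) * (\<Sum>i<n. \<rho> i)"
  define D where "D = Max ((\<lambda>i. norm (xs i - xstar)) ` {..<n})"
  define S where "S k = {hs. set hs \<subseteq> {..<n} \<and> length hs = k}" for k
  define E where "E k = (1 / real n ^ k) * (\<Sum>hs \<in> S k. norm (x hs - xstar))" for k
  have npos: "real n > 0" using n_pos by simp
  have rho0: "\<rho> i \<ge> 0" if "i < n" for i using mu_pos[OF that] mu_le_L[OF that] by (simp add: \<rho>_def)
  have rho1: "\<rho> i < 1" if "i < n" for i using mu_pos[OF that] mu_le_L[OF that] by (simp add: \<rho>_def)
  have Dge: "norm (xs i - xstar) \<le> D" if "i < n" for i
    unfolding D_def using that by (intro Max_ge) auto
  have D0: "D \<ge> 0"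
  proof -
    have "0 < n" using n_pos by simp
    then show ?thesis using Dge[of 0] norm_ge_zero[of "xs 0 - xstar"] by linarith
  qed
  have sum\<rho>: "(\<Sum>i<n. \<rho> i) = real n * \<rho>bar" using npos by (simp add: \<rho>bar_def)
  have rb0: "\<rho>bar \<ge> 0"
  proof -
    have "(\<Sum>i<n. \<rho> i) \<ge> 0" using rho0 by (intro sum_nonneg) auto
    then show ?thesis by (simp add: \<rho>bar_def)
  qed
  have rb1: "\<rho>bar < 1"
  proof -
    have "(\<Sum>i<n. \<rho> i) < (\<Sum>i<n. 1)" using n_pos rho1 by (intro sum_strict_mono) (auto simp: lessThan_empty_iff)
    then have "real n * \<rho>bar < real n" using sum\<rho> by simp
    then show ?thesis using npos by simp
  qed
  have onestep: "norm (x (hs @ [i]) - xstar) \<le> \<rho> i * norm (x hs - xstar) + (1 + \<rho> i) * D"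
    if hs: "set hs \<subseteq> {..<n}" and i: "i < n" for hs i
  proof -
    have "norm (x (hs @ [i]) - xs i) ^ 2 \<le> (\<rho> i * norm (x hs - xs i)) ^ 2"
      using part1[OF hs i] unfolding \<rho>_def power_mult_distrib .
    then have c1: "norm (x (hs @ [i]) - xs i) \<le> \<rho> i * norm (x hs - xs i)"
      by (rule power2_le_imp_le) (use rho0[OF i] in simp)
    have t1: "norm (x hs - xs i) \<le> norm (x hs - xstar) + norm (xstar - xs i)"
      by (rule norm_diff_triangle_le) auto
    have "norm (x hs - xs i) \<le> norm (x hs - xstar) + D"
      using t1 Dge[OF i] norm_minus_commute[of xstar "xs i"] by linarith
    then have "\<rho> i * norm (x hs - xs i) \<le> \<rho> i * (norm (x hs - xstar) + D)"
      using rho0[OF i] by (intro mult_left_mono) auto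
    moreover have "norm (x (hs @ [i]) - xstar) \<le> norm (x (hs @ [i]) - xs i) + norm (xs i - xstar)"
      by (rule norm_diff_triangle_le) auto
    ultimately show ?thesis using c1 Dge[OF i] by (simp add: algebra_simps)
  qed
  have finS: "finite (S k)" for k unfolding S_def by (rule finite_lists_length_eq) simp
  have cardS: "card (S k) = n ^ k" for k unfolding S_def by (simp add: card_lists_length_eq)
  have Ssuc: "S (Suc k) = (\<lambda>(hs, i). hs @ [i]) ` (S k \<times> {..<n})" for k
  proof
    show "S (Suc k) \<subseteq> (\<lambda>(hs, i). hs @ [i]) ` (S k \<times> {..<n})"
    proof
      fix l assume "l \<in> S (Suc k)"
      then have l: "set l \<subseteq> {..<n}" "length l = Suc k" by (auto simp: S_def)
      then obtain y ys where "l = ys @ [y]" "length ys = k" by (auto simp: length_Suc_conv_rev)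
      with l show "l \<in> (\<lambda>(hs, i). hs @ [i]) ` (S k \<times> {..<n})"
        by (auto simp: S_def image_iff)
    qed
    show "(\<lambda>(hs, i). hs @ [i]) ` (S k \<times> {..<n}) \<subseteq> S (Suc k)" by (auto simp: S_def)
  qed
  have inj: "inj_on (\<lambda>(hs, i). hs @ [i]) (S k \<times> {..<n})" for k
    by (auto simp: inj_on_def)
  have rec: "E (Suc k) \<le> \<rho>bar * E k + (1 + \<rho>bar) * D" for k
  proof -
    define a where "a hs = norm (x hs - xstar)" for hs
    have "(\<Sum>hs \<in> S (Suc k). a hs) = (\<Sum>p \<in> S k \<times> {..<n}. a (fst p @ [snd p]))"
      unfolding Ssuc sum.reindex[OF inj] by (simp add: case_prod_unfold)
    also have "\<dots> = (\<Sum>hs \<in> S k. \<Sum>i<n. a (hs @ [i]))"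
      by (simp add: sum.cartesian_product case_prod_unfold)
    also have "\<dots> \<le> (\<Sum>hs \<in> S k. \<Sum>i<n. \<rho> i * a hs + (1 + \<rho> i) * D)"
      by (intro sum_mono) (auto simp: a_def S_def intro!: onestep)
    also have "\<dots> = (\<Sum>hs \<in> S k. real n * \<rho>bar * a hs + real n * (1 + \<rho>bar) * D)"
    proof (rule sum.cong[OF refl])
      fix hs
      have "(\<Sum>i<n. \<rho> i * a hs + (1 + \<rho> i) * D) = (\<Sum>i<n. \<rho> i) * a hs + (real n + (\<Sum>i<n. \<rho> i)) * D"
        by (simp add: sum.distrib sum_distrib_right sum_distrib_left algebra_simps)
      then show "(\<Sum>i<n. \<rho> i * a hs + (1 + \<rho> i) * D) = real n * \<rho>bar * a hs + real n * (1 + \<rho>bar) * D"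
        by (simp add: sum\<rho> algebra_simps)
    qed
    also have "\<dots> = real n * \<rho>bar * (\<Sum>hs \<in> S k. a hs) + real n ^ Suc k * (1 + \<rho>bar) * D"
      by (simp add: sum.distrib sum_distrib_left cardS algebra_simps)
    finally have "(\<Sum>hs \<in> S (Suc k). a hs) \<le> real n * \<rho>bar * (\<Sum>hs \<in> S k. a hs) + real n ^ Suc k * (1 + \<rho>bar) * D" .
    then have "(1 / real n ^ Suc k) * (\<Sum>hs \<in> S (Suc k). a hs)
        \<le> (1 / real n ^ Suc k) * (real n * \<rho>bar * (\<Sum>hs \<in> S k. a hs) + real n ^ Suc k * (1 + \<rho>bar) * D)"
      using npos by (intro mult_left_mono) auto
    also have "\<dots> = \<rho>bar * ((1 / real n ^ k) * (\<Sum>hs \<in> S k. a hs)) + (1 + \<rho>bar) * D"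
      using npos by (simp add: field_simps)
    finally show ?thesis by (simp add: E_def a_def)
  qed
  define M where "M = (1 + \<rho>bar) / (1 - \<rho>bar) * D"
  have M: "\<rho>bar * M + (1 + \<rho>bar) * D = M" using rb1 by (simp add: M_def field_simps)
  have E0: "E 0 = norm (x [] - xstar)"
  proof -
    have "S 0 = {[]}" by (auto simp: S_def)
    then show ?thesis by (simp add: E_def)
  qed
  have bound: "E k \<le> \<rho>bar ^ k * norm (x [] - xstar) + M" for k
  proof (induction k)
    case 0
    have "M \<ge> 0" using rb0 rb1 D0 by (simp add: M_def)
    then show ?case using E0 by simp
  next
    case (Suc k)
    have "E (Suc k) \<le> \<rho>bar * E k + (1 + \<rho>bar) * D" by (rule rec)
    also have "\<dots> \<le> \<rho>bar * (\<rho>bar ^ k * norm (x [] - xstar) + M) + (1 + \<rho>bar) * D"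
      using Suc rb0 by (intro add_right_mono mult_left_mono) auto
    also have "\<dots> = \<rho>bar ^ Suc k * norm (x [] - xstar) + M"
      using M by (simp add: algebra_simps)
    finally show ?case .
  qed
  show ?thesis
  proof (intro conjI allI impI)
    fix hs i assume "set hs \<subseteq> {..<n}" "i < n"
    then show "norm (x (hs @ [i]) - xs i) ^ 2 \<le> ((L i - \<mu> i) / (L i + \<mu> i)) ^ 2 * norm (x hs - xs i) ^ 2"
      by (rule part1)
  next
    fix k :: nat
    show "let \<rho>bar = 1 / real n * (\<Sum>i<n. (L i - \<mu> i) / (L i + \<mu> i));
              D = Max ((\<lambda>i. norm (xs i - xstar)) ` {..<n})
          in 1 / real n ^ k * (\<Sum>hs\<in>{hs. set hs \<subseteq> {..<n} \<and> length hs = k}. norm (x hs - xstar))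
             \<le> \<rho>bar ^ k * norm (x [] - xstar) + (1 + \<rho>bar) / (1 - \<rho>bar) * D"
      using bound[of k] unfolding Let_def E_def S_def M_def \<rho>bar_def D_def \<rho>_def .
  qed
qed

end
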